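(* Let $n\ge 2$ and let $\mathcal{C}(I,n)$ be the class of all vectors $\mathbf{X}=(X_1,\ldots,X_n)$ of independent $[0,1]$-valued random variables, with $U(\mathbf{X})=\max_i EX_i$ and $M(\mathbf{X})=E(\max_i X_i)$. Then for all $\mathbf{X}\in\mathcal{C}(I,n)$ with $U(\mathbf{X})>0$, $$M(\mathbf{X})/U(\mathbf{X})\le n,$$ and for all $\mathbf{X}\in\mathcal{C}(I,n)$, $$M(\mathbf{X})-U(\mathbf{X})\le n^{-1/(n-1)}-n^{-n/(n-1)}.$$ Moreover, equality in the latter inequality is attained by $\mathbf{Z}=(Z_1,\ldots,Z_n)$ with $Z_i$ iid Bernoulli random variables satisfying $P(Z_i=1)=1-n^{-1/(n-1)}$ (so that $U(\mathbf{Z})=1-n^{-1/(n-1)}$). *)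

theory Defs
  imports "HOL-Probability.Probability"
begin

text \<open>The class C(I,n): vectors (X_0,...,X_{n-1}) of independent [0,1]-valued
  random variables on a probability space M (indices shifted to 0..n-1).\<close>
definition class_CI :: "'a measure \<Rightarrow> nat \<Rightarrow> (nat \<Rightarrow> 'a \<Rightarrow> real) \<Rightarrow> bool" where
  "class_CI M n X \<longleftrightarrow> prob_space M
     \<and> (\<forall>i<n. X i \<in> borel_measurable M)
     \<and> prob_space.indep_vars M (\<lambda>_. borel) X {..<n}
     \<and> (\<forall>i<n. \<forall>\<omega>\<in>space M. X i \<omega> \<in> {0..1})"

definition U_max_exp :: "'a measure \<Rightarrow> nat \<Rightarrow> (nat \<Rightarrow> 'a \<Rightarrow> real) \<Rightarrow> real" where
  "U_max_exp M n X = (MAX i\<in>{..<n}. prob_space.expectation M (X i))"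

definition M_exp_max :: "'a measure \<Rightarrow> nat \<Rightarrow> (nat \<Rightarrow> 'a \<Rightarrow> real) \<Rightarrow> real" where
  "M_exp_max M n X = prob_space.expectation M (\<lambda>\<omega>. MAX i\<in>{..<n}. X i \<omega>)"

end

theory Submission
  imports Defs
begin

lemma tangent_pow:
  fixes t q :: real
  assumes "t \<ge> 0" "q \<ge> 0" "n \<ge> 1"
  shows "t^n - q^n \<ge> real n * q^(n-1) * (t - q)"
proof (cases "t \<ge> q")
  case True
  have "(\<Sum>i<n. q^(n - Suc i) * t^i) \<ge> (\<Sum>i<n. q^(n - 1))"
  proof (rule sum_mono)
    fix i assume "i \<in> {..<n}"
    have "q^(n - Suc i) * t^i \<ge> q^(n - Suc i) * q^i"
      using True assms by (intro mult_left_mono power_mono) auto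
    moreover have "q^(n - Suc i) * q^i = q^(n-1)" using \<open>i \<in> {..<n}\<close>
      by (simp add: power_add[symmetric])
    ultimately show "q^(n - Suc i) * t^i \<ge> q^(n-1)" by simp
  qed
  hence "(t - q) * (\<Sum>i<n. q^(n - Suc i) * t^i) \<ge> (t-q) * (real n * q^(n-1))"
    using True by (intro mult_left_mono) auto
  thus ?thesis by (simp add: power_diff_sumr2 algebra_simps)
next
  case False
  have "(\<Sum>i<n. q^(n - Suc i) * t^i) \<le> (\<Sum>i<n. q^(n - 1))"
  proof (rule sum_mono)
    fix i assume "i \<in> {..<n}"
    have "q^(n - Suc i) * t^i \<le> q^(n - Suc i) * q^i"
      using False assms by (intro mult_left_mono power_mono) auto
    moreover have "q^(n - Suc i) * q^i = q^(n-1)" using \<open>i \<in> {..<n}\<close>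
      by (simp add: power_add[symmetric])
    ultimately show "q^(n - Suc i) * t^i \<le> q^(n-1)" by simp
  qed
  hence "(t - q) * (\<Sum>i<n. q^(n - Suc i) * t^i) \<ge> (t-q) * (real n * q^(n-1))"
    using False by (intro mult_left_mono_neg) auto
  thus ?thesis by (simp add: power_diff_sumr2 algebra_simps)
qed

lemma q_facts:
  fixes n :: nat
  assumes "n \<ge> 2"
  defines "q \<equiv> real n powr (-1 / (real n - 1))"
  shows "q \<ge> 0" "q \<le> 1" "real n * q^(n-1) = 1"
    "q^n = real n powr (- real n / (real n - 1))"
proof -
  have n1: "real n - 1 > 0" using assms by simp
  show "q \<ge> 0" unfolding q_def by simp
  show "q \<le> 1" unfolding q_def using assms n1
    using powr_mono[of "-1 / (real n - 1)" 0 "real n"] by (simp add: divide_nonpos_pos)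
  have qp: "q^(n-1) = real n powr (-1)"
    unfolding q_def using n1 assms
    by (simp add: powr_realpow[symmetric] powr_powr of_nat_diff)
  thus "real n * q^(n-1) = 1" using assms by (simp add: powr_minus)
  have "q^n = q * q^(n-1)" using assms by (cases n) auto
  also have "\<dots> = q * real n powr (-1)" by (simp only: qp)
  also have "\<dots> = real n powr (-1 / (real n - 1) + -1)" unfolding q_def
    by (simp only: powr_add)
  also have "-1 / (real n - 1) + -1 = - real n / (real n - 1)" using n1
    by (simp add: field_simps)
  finally show "q^n = real n powr (- real n / (real n - 1))" .
qed


lemma ci_basic:
  assumes "class_CI M n X" "i < n"
  shows "integrable M (X i)" "0 \<le> prob_space.expectation M (X i)"
    "prob_space.expectation M (X i) \<le> 1"
proof -
  interpret prob_space M using assms unfolding class_CI_def by auto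
  have m: "X i \<in> borel_measurable M" and b: "\<And>\<omega>. \<omega> \<in> space M \<Longrightarrow> X i \<omega> \<in> {0..1}"
    using assms unfolding class_CI_def by auto
  show int: "integrable M (X i)"
    by (rule integrable_const_bound[where B=1]) (use m b in auto)
  show "0 \<le> expectation (X i)" using b by (intro integral_nonneg_AE AE_I2) auto
  have "expectation (X i) \<le> expectation (\<lambda>_. 1)"
    using b int by (intro integral_mono) auto
  thus "expectation (X i) \<le> 1" by (simp add: prob_space)
qed

lemma ci_prod:
  assumes "class_CI M n X"
  shows "prob_space.expectation M (\<lambda>\<omega>. \<Prod>i<n. 1 - X i \<omega>) = (\<Prod>i<n. 1 - prob_space.expectation M (X i))"
proof -
  interpret prob_space M using assms unfolding class_CI_def by auto
  have ind: "indep_vars (\<lambda>_. borel) X {..<n}" using assms unfolding class_CI_def by auto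
  have ind2: "indep_vars (\<lambda>_. borel) (\<lambda>i \<omega>. 1 - X i \<omega>) {..<n}"
    by (rule indep_vars_compose2[OF ind]) auto
  have int: "\<And>i. i \<in> {..<n} \<Longrightarrow> integrable M (\<lambda>\<omega>. 1 - X i \<omega>)"
    using ci_basic[OF assms] by auto
  have "expectation (\<lambda>\<omega>. \<Prod>i<n. 1 - X i \<omega>) = (\<Prod>i<n. expectation (\<lambda>\<omega>. 1 - X i \<omega>))"
    by (rule indep_vars_lebesgue_integral[OF _ ind2 int]) auto
  also have "\<dots> = (\<Prod>i<n. 1 - expectation (X i))"
    using ci_basic[OF assms] by (intro prod.cong refl) (simp add: prob_space)
  finally show ?thesis .
qed

lemma ci_max_int:
  assumes "class_CI M n X"
  shows "integrable M (\<lambda>\<omega>. MAX i\<in>{..<n}. X i \<omega>)"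
proof -
  interpret prob_space M using assms unfolding class_CI_def by auto
  have m: "\<And>i. i < n \<Longrightarrow> X i \<in> borel_measurable M" using assms unfolding class_CI_def by auto
  have b: "\<And>i \<omega>. i < n \<Longrightarrow> \<omega> \<in> space M \<Longrightarrow> X i \<omega> \<in> {0..1}"
    using assms unfolding class_CI_def by auto
  show ?thesis
  proof (cases "n = 0")
    case True thus ?thesis by simp
  next
    case False
    show ?thesis
    proof (rule integrable_const_bound[where B=1])
      show "(\<lambda>\<omega>. MAX i\<in>{..<n}. X i \<omega>) \<in> borel_measurable M"
        using m by (intro borel_measurable_Max) auto
      show "AE \<omega> in M. norm (MAX i\<in>{..<n}. X i \<omega>) \<le> 1"
      proof (rule AE_I2)
        fix \<omega> assume w: "\<omega> \<in> space M"
        obtain j where j: "j < n" "(MAX i\<in>{..<n}. X i \<omega>) = X j \<omega>"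
          proof -
          have "(MAX i\<in>{..<n}. X i \<omega>) \<in> (\<lambda>i. X i \<omega>) ` {..<n}"
            using False by (intro Max_in) auto
          thus ?thesis using that by auto
        qed
        show "norm (MAX i\<in>{..<n}. X i \<omega>) \<le> 1" using j b[OF j(1) w] by auto
      qed
    qed
  qed
qed

lemma ci_M_le:
  assumes "class_CI M n X" "n \<ge> 1"
  shows "M_exp_max M n X \<le> 1 - (\<Prod>i<n. 1 - prob_space.expectation M (X i))"
proof -
  interpret prob_space M using assms unfolding class_CI_def by auto
  have b: "\<And>i \<omega>. i < n \<Longrightarrow> \<omega> \<in> space M \<Longrightarrow> X i \<omega> \<in> {0..1}"
    using assms unfolding class_CI_def by auto
  have intq: "integrable M (\<lambda>\<omega>. \<Prod>i<n. 1 - X i \<omega>)"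
  proof -
    have ind: "indep_vars (\<lambda>_. borel) X {..<n}" using assms unfolding class_CI_def by auto
    have ind2: "indep_vars (\<lambda>_. borel) (\<lambda>i \<omega>. 1 - X i \<omega>) {..<n}"
      by (rule indep_vars_compose2[OF ind]) auto
    show ?thesis
      by (rule indep_vars_integrable[OF _ ind2]) (use ci_basic[OF assms(1)] in auto)
  qed
  have intp: "integrable M (\<lambda>\<omega>. 1 - (\<Prod>i<n. 1 - X i \<omega>))" using intq by auto
  have "M_exp_max M n X \<le> expectation (\<lambda>\<omega>. 1 - (\<Prod>i<n. 1 - X i \<omega>))"
    unfolding M_exp_max_def
  proof (rule integral_mono[OF ci_max_int[OF assms(1)] intp])
    fix \<omega> assume w: "\<omega> \<in> space M"
    obtain j where j: "j < n" "(MAX i\<in>{..<n}. X i \<omega>) = X j \<omega>"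
      proof -
          have "(MAX i\<in>{..<n}. X i \<omega>) \<in> (\<lambda>i. X i \<omega>) ` {..<n}"
            using assms(2) by (intro Max_in) (auto simp: lessThan_empty_iff)
          thus ?thesis using that by auto
        qed
    have "(\<Prod>i<n. 1 - X i \<omega>) = (1 - X j \<omega>) * (\<Prod>i\<in>{..<n} - {j}. 1 - X i \<omega>)"
      using j by (intro prod.remove) auto
    also have "\<dots> \<le> (1 - X j \<omega>) * 1"
      using b[OF j(1) w] b w by (intro mult_left_mono prod_le_1) auto
    finally show "(MAX i\<in>{..<n}. X i \<omega>) \<le> 1 - (\<Prod>i<n. 1 - X i \<omega>)" using j by simp
  qed
  also have "\<dots> = 1 - (\<Prod>i<n. 1 - expectation (X i))"
    using Bochner_Integration.integral_diff[OF integrable_const[of 1] intq] ci_prod[OF assms(1)]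
    by (simp add: prob_space)
  finally show ?thesis .
qed


lemma U_facts:
  assumes "class_CI M n X" "n \<ge> 1"
  shows "\<And>i. i < n \<Longrightarrow> prob_space.expectation M (X i) \<le> U_max_exp M n X"
    "0 \<le> U_max_exp M n X" "U_max_exp M n X \<le> 1"
proof -
  show le: "\<And>i. i < n \<Longrightarrow> prob_space.expectation M (X i) \<le> U_max_exp M n X"
    unfolding U_max_exp_def by (intro Max_ge) auto
  have "U_max_exp M n X \<in> (\<lambda>i. prob_space.expectation M (X i)) ` {..<n}"
    unfolding U_max_exp_def using assms(2) by (intro Max_in) (auto simp: lessThan_empty_iff)
  then obtain j where "j < n" "U_max_exp M n X = prob_space.expectation M (X j)" by auto
  thus "0 \<le> U_max_exp M n X" "U_max_exp M n X \<le> 1" using ci_basic[OF assms(1)] by auto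
qed

lemma part1:
  assumes "class_CI M n X" "n \<ge> 1" "U_max_exp M n X > 0"
  shows "M_exp_max M n X / U_max_exp M n X \<le> real n"
proof -
  interpret prob_space M using assms unfolding class_CI_def by auto
  have b: "\<And>i \<omega>. i < n \<Longrightarrow> \<omega> \<in> space M \<Longrightarrow> X i \<omega> \<in> {0..1}"
    using assms unfolding class_CI_def by auto
  have "M_exp_max M n X \<le> expectation (\<lambda>\<omega>. \<Sum>i<n. X i \<omega>)"
    unfolding M_exp_max_def
  proof (rule integral_mono[OF ci_max_int[OF assms(1)]])
    show "integrable M (\<lambda>\<omega>. \<Sum>i<n. X i \<omega>)" using ci_basic[OF assms(1)] by auto
    fix \<omega> assume w: "\<omega> \<in> space M"
    obtain j where j: "j < n" "(MAX i\<in>{..<n}. X i \<omega>) = X j \<omega>"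
    proof -
      have "(MAX i\<in>{..<n}. X i \<omega>) \<in> (\<lambda>i. X i \<omega>) ` {..<n}"
        using assms(2) by (intro Max_in) (auto simp: lessThan_empty_iff)
      thus ?thesis using that by auto
    qed
    have "X j \<omega> \<le> (\<Sum>i<n. X i \<omega>)"
      using j b w by (intro member_le_sum) auto
    thus "(MAX i\<in>{..<n}. X i \<omega>) \<le> (\<Sum>i<n. X i \<omega>)" using j by simp
  qed
  also have "\<dots> = (\<Sum>i<n. expectation (X i))"
    using ci_basic[OF assms(1)] by (intro Bochner_Integration.integral_sum) auto
  also have "\<dots> \<le> (\<Sum>i<n. U_max_exp M n X)"
    using U_facts[OF assms(1,2)] by (intro sum_mono) auto
  also have "\<dots> = real n * U_max_exp M n X" by simp
  finally show ?thesis using assms(3) by (simp add: divide_le_eq)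
qed

lemma part2:
  assumes "class_CI M n X" "n \<ge> 2"
  shows "M_exp_max M n X - U_max_exp M n X
              \<le> real n powr (-1 / (real n - 1)) - real n powr (- real n / (real n - 1))"
proof -
  define q where "q = real n powr (-1 / (real n - 1))"
  note qf = q_facts[OF assms(2), folded q_def]
  define U where "U = U_max_exp M n X"
  have n1: "n \<ge> 1" using assms by simp
  note Uf = U_facts[OF assms(1) n1, folded U_def]
  have "(\<Prod>i<n. 1 - U) \<le> (\<Prod>i<n. 1 - prob_space.expectation M (X i))"
    using Uf by (intro prod_mono) auto
  hence "M_exp_max M n X \<le> 1 - (1 - U)^n" using ci_M_le[OF assms(1) n1] by simp
  moreover have "(1-U)^n - q^n \<ge> real n * q^(n-1) * ((1-U) - q)"
    using Uf qf n1 by (intro tangent_pow) auto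
  ultimately have "M_exp_max M n X - U \<le> q - q^n" using qf by simp
  thus ?thesis using qf unfolding U_def q_def by simp
qed


lemma part3:
  assumes "class_CI N n Z" "n \<ge> 2"
    and bin: "\<forall>i<n. \<forall>\<omega>\<in>space N. Z i \<omega> \<in> {0, 1}"
    and pr: "\<forall>i<n. measure N {\<omega>\<in>space N. Z i \<omega> = 1} = 1 - real n powr (-1 / (real n - 1))"
  shows "U_max_exp N n Z = 1 - real n powr (-1 / (real n - 1))
              \<and> M_exp_max N n Z - U_max_exp N n Z
                  = real n powr (-1 / (real n - 1)) - real n powr (- real n / (real n - 1))"
proof -
  interpret prob_space N using assms unfolding class_CI_def by auto
  define q where "q = real n powr (-1 / (real n - 1))"
  note qf = q_facts[OF assms(2), folded q_def]
  have n1: "n \<ge> 1" using assms by simp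
  have m: "\<And>i. i < n \<Longrightarrow> Z i \<in> borel_measurable N" using assms unfolding class_CI_def by auto
  have EZ: "expectation (Z i) = 1 - q" if i: "i < n" for i
  proof -
    have "expectation (Z i) = expectation (indicator {\<omega>\<in>space N. Z i \<omega> = 1})"
      using bin i by (intro Bochner_Integration.integral_cong refl) (auto simp: indicator_def)
    also have "\<dots> = measure N {\<omega>\<in>space N. Z i \<omega> = 1}"
      by (simp add: Int_absorb2 subsetI)
    finally show ?thesis using pr i q_def by simp
  qed
  have U: "U_max_exp N n Z = 1 - q"
  proof -
    have "(\<lambda>i. expectation (Z i)) ` {..<n} = {1 - q}"
      using EZ n1 by (auto intro!: image_eqI[of _ _ 0])
    thus ?thesis unfolding U_max_exp_def by simp
  qed
  have "M_exp_max N n Z = expectation (\<lambda>\<omega>. 1 - (\<Prod>i<n. 1 - Z i \<omega>))"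
    unfolding M_exp_max_def
  proof (intro Bochner_Integration.integral_cong refl)
    fix \<omega> assume w: "\<omega> \<in> space N"
    show "(MAX i\<in>{..<n}. Z i \<omega>) = 1 - (\<Prod>i<n. 1 - Z i \<omega>)"
    proof (cases "\<exists>j<n. Z j \<omega> = 1")
      case True
      then obtain j where j: "j < n" "Z j \<omega> = 1" by auto
      have "(\<Prod>i<n. 1 - Z i \<omega>) = 0" using j by (intro prod_zero) auto
      moreover have "(MAX i\<in>{..<n}. Z i \<omega>) = 1"
      proof (rule antisym)
        have "(MAX i\<in>{..<n}. Z i \<omega>) \<in> (\<lambda>i. Z i \<omega>) ` {..<n}"
          using n1 by (intro Max_in) (auto simp: lessThan_empty_iff)
        thus "(MAX i\<in>{..<n}. Z i \<omega>) \<le> 1" using bin w by fastforce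
        show "1 \<le> (MAX i\<in>{..<n}. Z i \<omega>)" using j by (intro Max_ge_iff[THEN iffD2]) (auto intro!: bexI[of _ j])
      qed
      ultimately show ?thesis by simp
    next
      case False
      hence z: "\<And>i. i < n \<Longrightarrow> Z i \<omega> = 0" using bin w by auto
      have "(\<Prod>i<n. 1 - Z i \<omega>) = 1" using z by (intro prod.neutral) auto
      moreover have "(\<lambda>i. Z i \<omega>) ` {..<n} = {0}" using z n1 by (auto intro!: image_eqI[of _ _ 0])
      ultimately show ?thesis by simp
    qed
  qed
  also have "\<dots> = 1 - (\<Prod>i<n. 1 - expectation (Z i))"
  proof -
    have ind: "indep_vars (\<lambda>_. borel) Z {..<n}" using assms unfolding class_CI_def by auto
    have ind2: "indep_vars (\<lambda>_. borel) (\<lambda>i \<omega>. 1 - Z i \<omega>) {..<n}"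
      by (rule indep_vars_compose2[OF ind]) auto
    have intq: "integrable N (\<lambda>\<omega>. \<Prod>i<n. 1 - Z i \<omega>)"
      by (rule indep_vars_integrable[OF _ ind2]) (use ci_basic[OF assms(1)] in auto)
    show ?thesis
      using Bochner_Integration.integral_diff[OF integrable_const[of 1] intq] ci_prod[OF assms(1)]
      by (simp add: prob_space)
  qed
  also have "\<dots> = 1 - q^n" using EZ by simp
  finally show ?thesis using U qf unfolding q_def by simp
qed


theorem mainTheorem3:
  fixes n :: nat
  assumes "n \<ge> 2"
  shows "(\<forall>(M::'a measure) X. class_CI M n X \<and> U_max_exp M n X > 0 \<longrightarrow>
            M_exp_max M n X / U_max_exp M n X \<le> real n)
       \<and> (\<forall>(M::'a measure) X. class_CI M n X \<longrightarrow>
            M_exp_max M n X - U_max_exp M n X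
              \<le> real n powr (-1 / (real n - 1)) - real n powr (- real n / (real n - 1)))
       \<and> (\<forall>(N::'b measure) Z. class_CI N n Z
            \<and> (\<forall>i<n. \<forall>\<omega>\<in>space N. Z i \<omega> \<in> {0, 1})
            \<and> (\<forall>i<n. measure N {\<omega>\<in>space N. Z i \<omega> = 1} = 1 - real n powr (-1 / (real n - 1)))
            \<longrightarrow> U_max_exp N n Z = 1 - real n powr (-1 / (real n - 1))
              \<and> M_exp_max N n Z - U_max_exp N n Z
                  = real n powr (-1 / (real n - 1)) - real n powr (- real n / (real n - 1)))"
  proof (intro conjI allI impI)
  have n1: "n \<ge> 1" using assms by simp
  fix M :: "'a measure" and X
  assume "class_CI M n X \<and> U_max_exp M n X > 0"
  thus "M_exp_max M n X / U_max_exp M n X \<le> real n" using part1[OF _ n1] by blast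
next
  fix M :: "'a measure" and X
  assume "class_CI M n X"
  thus "M_exp_max M n X - U_max_exp M n X
              \<le> real n powr (-1 / (real n - 1)) - real n powr (- real n / (real n - 1))"
    using part2[OF _ assms] by blast
next
  fix N :: "'b measure" and Z
  assume h: "class_CI N n Z
            \<and> (\<forall>i<n. \<forall>\<omega>\<in>space N. Z i \<omega> \<in> {0, 1})
            \<and> (\<forall>i<n. measure N {\<omega>\<in>space N. Z i \<omega> = 1} = 1 - real n powr (-1 / (real n - 1)))"
  note p = part3[of N n Z, OF conjunct1[OF h] assms conjunct1[OF conjunct2[OF h]] conjunct2[OF conjunct2[OF h]]]
  show "U_max_exp N n Z = 1 - real n powr (-1 / (real n - 1))" using p by blast
  show "M_exp_max N n Z - U_max_exp N n Z
                  = real n powr (-1 / (real n - 1)) - real n powr (- real n / (real n - 1))" using p by blast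
qed

end
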